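(* Let $\mathcal{K}$ be a family of kernels on $X\times X$, let $\epsilon,\gamma>0$, and let $\mathbf{P}=(P_1,\dots,P_{2n})$ be any probability distributions over $X\times Y$. Then there exists $\tilde{\mathcal{K}}\subset\mathcal{K}$ with $|\tilde{\mathcal{K}}|\leq N_{(D,2n)}(\mathcal{K},\epsilon\gamma/16)$ such that for every $K\in\mathcal{K}$ there exists $\tilde K\in\tilde{\mathcal{K}}$ with \[ er^\gamma_{P_i}(\mathcal{F}_K)+\epsilon/8\geq er^{\gamma/2}_{P_i}(\mathcal{F}_{\tilde{K}})\geq er_{P_i}(\mathcal{F}_K)-\epsilon/8\quad \text{for all } i=1,\dots,2n. \]
   Context: $Y=\{-1,1\}$. A kernel is $K(x,x')=\langle\phi(x),\phi(x')\rangle$ for a map $\phi$ into a Hilbert space; $\mathcal{F}_K=\{x\mapsto\langle w,\phi(x)\rangle:\|w\|\le1\}$. $\llbracket\cdot\rrbracket$ is the indicator. For a distribution $P$ on $X\times Y$: $er_P(\mathcal{F}_K)=\inf_{h\in\mathcal{F}_K}\mathbb{E}_{(x,y)\sim P}\llbracket h(x)y<0\rrbracket$ and $er^\gamma_P(\mathcal{F}_K)=\inf_{h\in\mathcal{F}_K}\mathbb{E}_{(x,y)\sim P}\llbracket h(x)y<\gamma\rrbracket$. With $P_X$ the marginal on $X$, $D_P(K,\tilde K)=\max\{\max_{h\in\mathcal{F}_K}\min_{h'\in\mathcal{F}_{\tilde K}}\mathbb{E}_{x\sim P_X}|h(x)-h'(x)|,\ \max_{h'\in\mathcal{F}_{\tilde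 K}}\min_{h\in\mathcal{F}_K}\mathbb{E}_{x\sim P_X}|h(x)-h'(x)|\}$; for a tuple $\mathbf{Q}=(Q_1,\dots,Q_r)$, $D_{\mathbf{Q}}=\max_i D_{Q_i}$. An $\epsilon$-cover of $\mathcal{K}$ w.r.t. $D_{\mathbf{Q}}$ is a subset $\tilde{\mathcal{K}}\subset\mathcal{K}$ with every $K$ having $\tilde K\in\tilde{\mathcal{K}}$, $D_{\mathbf{Q}}(K,\tilde K)<\epsilon$; $N_{D_{\mathbf{Q}}}(\mathcal{K},\epsilon)$ is its minimal size and $N_{(D,r)}(\mathcal{K},\epsilon)=\max_{(Q_1,\dots,Q_r)}N_{D_{\mathbf{Q}}}(\mathcal{K},\epsilon)$. *)

theory Defs
  imports "HOL-Probability.Probability"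
begin

definition lab :: "bool \<Rightarrow> real" where
  "lab y = (if y then 1 else -1)"

definition is_kernel :: "'h::{real_inner,complete_space} itself \<Rightarrow> ('x \<Rightarrow> 'x \<Rightarrow> real) \<Rightarrow> bool" where
  "is_kernel T K \<longleftrightarrow> (\<exists>\<phi>::'x \<Rightarrow> 'h. \<forall>x x'. K x x' = inner (\<phi> x) (\<phi> x'))"

text \<open>F_K = {x. <w, phi x> : norm w <= 1}, for a feature map phi (into 'h) realising K.
  (This set does not depend on the choice of phi.)\<close>
definition Fk :: "'h::{real_inner,complete_space} itself \<Rightarrow> ('x \<Rightarrow> 'x \<Rightarrow> real) \<Rightarrow> ('x \<Rightarrow> real) set" where
  "Fk T K = {h. \<exists>\<phi>::'x \<Rightarrow> 'h. (\<forall>x x'. K x x' = inner (\<phi> x) (\<phi> x')) \<and>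
                 (\<exists>w. norm w \<le> 1 \<and> h = (\<lambda>x. inner w (\<phi> x)))}"

definition err :: "('x \<times> bool) measure \<Rightarrow> ('x \<Rightarrow> real) set \<Rightarrow> real" where
  "err P F = (INF h\<in>F. measure P {z \<in> space P. h (fst z) * lab (snd z) < 0})"

definition err_margin :: "('x \<times> bool) measure \<Rightarrow> real \<Rightarrow> ('x \<Rightarrow> real) set \<Rightarrow> real" where
  "err_margin P \<gamma> F = (INF h\<in>F. measure P {z \<in> space P. h (fst z) * lab (snd z) < \<gamma>})"

definition dist_XY :: "'x measure \<Rightarrow> ('x \<times> bool) measure \<Rightarrow> bool" where
  "dist_XY M P \<longleftrightarrow> prob_space P \<and> sets P = sets (M \<Otimes>\<^sub>M count_space UNIV)"

definition Ldist :: "'x measure \<Rightarrow> ('x \<times> bool) measure \<Rightarrow> ('x \<Rightarrow> real) \<Rightarrow> ('x \<Rightarrow> real) \<Rightarrow> ennreal" where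
  "Ldist M P h h' = (\<integral>\<^sup>+ x. ennreal \<bar>h x - h' x\<bar> \<partial>(distr P M fst))"

definition Dk :: "'h::{real_inner,complete_space} itself \<Rightarrow> 'x measure \<Rightarrow> ('x \<times> bool) measure
    \<Rightarrow> ('x \<Rightarrow> 'x \<Rightarrow> real) \<Rightarrow> ('x \<Rightarrow> 'x \<Rightarrow> real) \<Rightarrow> ennreal" where
  "Dk T M P K K' = max (SUP h\<in>Fk T K. INF h'\<in>Fk T K'. Ldist M P h h')
                       (SUP h'\<in>Fk T K'. INF h\<in>Fk T K. Ldist M P h h')"

definition DQ :: "'h::{real_inner,complete_space} itself \<Rightarrow> 'x measure \<Rightarrow> nat \<Rightarrow> (nat \<Rightarrow> ('x \<times> bool) measure)
    \<Rightarrow> ('x \<Rightarrow> 'x \<Rightarrow> real) \<Rightarrow> ('x \<Rightarrow> 'x \<Rightarrow> real) \<Rightarrow> ennreal" where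
  "DQ T M r Q K K' = (SUP i\<in>{..<r}. Dk T M (Q i) K K')"

definition is_cover :: "'h::{real_inner,complete_space} itself \<Rightarrow> 'x measure \<Rightarrow> nat \<Rightarrow> (nat \<Rightarrow> ('x \<times> bool) measure)
    \<Rightarrow> ('x \<Rightarrow> 'x \<Rightarrow> real) set \<Rightarrow> ennreal \<Rightarrow> ('x \<Rightarrow> 'x \<Rightarrow> real) set \<Rightarrow> bool" where
  "is_cover T M r Q Ks \<epsilon> C \<longleftrightarrow> C \<subseteq> Ks \<and> (\<forall>K\<in>Ks. \<exists>K'\<in>C. DQ T M r Q K K' < \<epsilon>)"

definition ecard :: "'a set \<Rightarrow> enat" where
  "ecard C = (if finite C then enat (card C) else \<infinity>)"

definition cov_num :: "'h::{real_inner,complete_space} itself \<Rightarrow> 'x measure \<Rightarrow> nat \<Rightarrow> (nat \<Rightarrow> ('x \<times> bool) measure)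
    \<Rightarrow> ('x \<Rightarrow> 'x \<Rightarrow> real) set \<Rightarrow> ennreal \<Rightarrow> enat" where
  "cov_num T M r Q Ks \<epsilon> = (INF C\<in>{C. is_cover T M r Q Ks \<epsilon> C}. ecard C)"

definition cov_num_max :: "'h::{real_inner,complete_space} itself \<Rightarrow> 'x measure \<Rightarrow> nat
    \<Rightarrow> ('x \<Rightarrow> 'x \<Rightarrow> real) set \<Rightarrow> ennreal \<Rightarrow> enat" where
  "cov_num_max T M r Ks \<epsilon> = (SUP Q\<in>{Q. \<forall>i<r. dist_XY M (Q i)}. cov_num T M r Q Ks \<epsilon>)"

end

theory Submission
  imports Defs
begin

lemma lab_meas[measurable]: "lab \<in> borel_measurable (count_space UNIV)"
  by simp

lemma abs_lab: "\<bar>lab y\<bar> = 1"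
  by (simp add: lab_def)

lemma fst_meas_P:
  assumes "sets Pm = sets (M \<Otimes>\<^sub>M count_space UNIV)"
  shows "fst \<in> measurable Pm M"
  by (subst measurable_cong_sets[OF assms refl]) (rule measurable_fst)

lemma fun_meas_P:
  assumes "sets Pm = sets (M \<Otimes>\<^sub>M count_space UNIV)" and [measurable]: "h \<in> borel_measurable M"
  shows "(\<lambda>z. h (fst z) * lab (snd z)) \<in> borel_measurable Pm"
proof -
  have "(\<lambda>z. h (fst z) * lab (snd z)) \<in> borel_measurable (M \<Otimes>\<^sub>M count_space UNIV)"
    by measurable
  then show ?thesis by (subst measurable_cong_sets[OF assms(1) refl])
qed

lemma fun_meas_P2:
  fixes h h' :: "'x \<Rightarrow> real"
  assumes "sets Pm = sets (M \<Otimes>\<^sub>M count_space UNIV)" and [measurable]: "h \<in> borel_measurable M"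
     "h' \<in> borel_measurable M"
  shows "(\<lambda>z. \<bar>h (fst z) - h' (fst z)\<bar>) \<in> borel_measurable Pm"
proof -
  have "(\<lambda>z. \<bar>h (fst z) - h' (fst z)\<bar>) \<in> borel_measurable (M \<Otimes>\<^sub>M count_space UNIV)"
    by measurable
  then show ?thesis by (subst measurable_cong_sets[OF assms(1) refl])
qed

lemma markov_step:
  assumes ps: "prob_space Pm" and sP: "sets Pm = sets (M \<Otimes>\<^sub>M count_space UNIV)"
    and hm: "h \<in> borel_measurable M" and hm': "h' \<in> borel_measurable M"
    and L: "Ldist M Pm h h' < ennreal (e*g/16)" and e: "e > 0" and g: "g > 0"
  shows "measure Pm {z\<in>space Pm. g/2 \<le> \<bar>h (fst z) - h' (fst z)\<bar>} < e/8"
proof -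
  interpret prob_space Pm by (rule ps)
  have fm: "fst \<in> measurable Pm M" by (rule fst_meas_P[OF sP])
  have dm: "(\<lambda>z. \<bar>h (fst z) - h' (fst z)\<bar>) \<in> borel_measurable Pm"
    by (rule fun_meas_P2[OF sP hm hm'])
  define B where "B = {z\<in>space Pm. g/2 \<le> \<bar>h (fst z) - h' (fst z)\<bar>}"
  have Bs: "B \<in> sets Pm" unfolding B_def using dm by measurable
  have xm: "(\<lambda>x. ennreal \<bar>h x - h' x\<bar>) \<in> borel_measurable (distr Pm M fst)"
    using hm hm' by simp
  have "Ldist M Pm h h' = (\<integral>\<^sup>+ z. ennreal \<bar>h (fst z) - h' (fst z)\<bar> \<partial>Pm)"
    unfolding Ldist_def by (rule nn_integral_distr[OF fm xm])
  moreover have "ennreal (g/2) * emeasure Pm B = (\<integral>\<^sup>+ z. ennreal (g/2) * indicator B z \<partial>Pm)"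
    using Bs by (simp add: nn_integral_cmult_indicator)
  moreover have "(\<integral>\<^sup>+ z. ennreal (g/2) * indicator B z \<partial>Pm) \<le> (\<integral>\<^sup>+ z. ennreal \<bar>h (fst z) - h' (fst z)\<bar> \<partial>Pm)"
    by (intro nn_integral_mono) (auto simp: B_def indicator_def)
  ultimately have "ennreal (g/2) * emeasure Pm B < ennreal (e*g/16)"
    using L by (metis order.strict_trans1)
  moreover have "ennreal (g/2) * emeasure Pm B = ennreal (g/2 * measure Pm B)"
    unfolding emeasure_eq_measure by (rule ennreal_mult[symmetric]) (use g in auto)
  ultimately have "ennreal (g/2 * measure Pm B) < ennreal (e*g/16)"
    by simp
  then have "g/2 * measure Pm B < e*g/16"
    using e g by (simp add: ennreal_less_iff)
  then show ?thesis using g unfolding B_def by (simp add: field_simps)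
qed

lemma pair_step:
  assumes ps: "prob_space Pm" and sP: "sets Pm = sets (M \<Otimes>\<^sub>M count_space UNIV)"
    and hm: "h \<in> borel_measurable M" and hm': "h' \<in> borel_measurable M"
    and L: "Ldist M Pm h h' < ennreal (e*g/16)" and e: "e > 0" and g: "g > 0"
  shows "measure Pm {z\<in>space Pm. h' (fst z) * lab (snd z) < g/2}
           < measure Pm {z\<in>space Pm. h (fst z) * lab (snd z) < g} + e/8"
    and "measure Pm {z\<in>space Pm. h (fst z) * lab (snd z) < 0}
           < measure Pm {z\<in>space Pm. h' (fst z) * lab (snd z) < g/2} + e/8"
proof -
  interpret prob_space Pm by (rule ps)
  define B where "B = {z\<in>space Pm. g/2 \<le> \<bar>h (fst z) - h' (fst z)\<bar>}"
  have mB: "measure Pm B < e/8" unfolding B_def by (rule markov_step[OF assms])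
  have dm: "(\<lambda>z. \<bar>h (fst z) - h' (fst z)\<bar>) \<in> borel_measurable Pm"
    by (rule fun_meas_P2[OF sP hm hm'])
  have Bs: "B \<in> sets Pm" unfolding B_def using dm by measurable
  have f1: "(\<lambda>z. h (fst z) * lab (snd z)) \<in> borel_measurable Pm" by (rule fun_meas_P[OF sP hm])
  have f2: "(\<lambda>z. h' (fst z) * lab (snd z)) \<in> borel_measurable Pm" by (rule fun_meas_P[OF sP hm'])
  define A1 where "A1 = {z\<in>space Pm. h (fst z) * lab (snd z) < g}"
  define A0 where "A0 = {z\<in>space Pm. h (fst z) * lab (snd z) < 0}"
  define A2 where "A2 = {z\<in>space Pm. h' (fst z) * lab (snd z) < g/2}"
  have s1: "A1 \<in> sets Pm" unfolding A1_def using f1 by measurable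
  have s2: "A2 \<in> sets Pm" unfolding A2_def using f2 by measurable
  have key: "\<bar>h (fst z) - h' (fst z)\<bar> = \<bar>h (fst z) * lab (snd z) - h' (fst z) * lab (snd z)\<bar>" for z
    by (metis abs_lab abs_mult left_diff_distrib mult.right_neutral)
  have "A2 \<subseteq> A1 \<union> B"
  proof
    fix z assume "z \<in> A2"
    then show "z \<in> A1 \<union> B" unfolding A1_def A2_def B_def using key[of z] abs_ge_self[of "h (fst z) * lab (snd z) - h' (fst z) * lab (snd z)"]
       abs_ge_minus_self[of "h (fst z) * lab (snd z) - h' (fst z) * lab (snd z)"] by auto
  qed
  then have "measure Pm A2 \<le> measure Pm (A1 \<union> B)"
    using s1 Bs by (intro finite_measure_mono) auto
  also have "\<dots> \<le> measure Pm A1 + measure Pm B"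
    using s1 Bs by (rule measure_Un_le)
  finally show "measure Pm {z\<in>space Pm. h' (fst z) * lab (snd z) < g/2}
           < measure Pm {z\<in>space Pm. h (fst z) * lab (snd z) < g} + e/8"
    using mB unfolding A1_def A2_def by linarith
  have "A0 \<subseteq> A2 \<union> B"
  proof
    fix z assume "z \<in> A0"
    then show "z \<in> A2 \<union> B" unfolding A0_def A2_def B_def using key[of z] abs_ge_self[of "h (fst z) * lab (snd z) - h' (fst z) * lab (snd z)"]
       abs_ge_minus_self[of "h (fst z) * lab (snd z) - h' (fst z) * lab (snd z)"] by auto
  qed
  then have "measure Pm A0 \<le> measure Pm (A2 \<union> B)"
    using s2 Bs by (intro finite_measure_mono) auto
  also have "\<dots> \<le> measure Pm A2 + measure Pm B"
    using s2 Bs by (rule measure_Un_le)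
  finally show "measure Pm {z\<in>space Pm. h (fst z) * lab (snd z) < 0}
           < measure Pm {z\<in>space Pm. h' (fst z) * lab (snd z) < g/2} + e/8"
    using mB unfolding A0_def A2_def by linarith
qed

lemma Fk_nonempty:
  fixes T :: "'h::{real_inner,complete_space} itself"
  assumes "is_kernel T K" shows "Fk T K \<noteq> {}"
proof -
  obtain \<phi> :: "_ \<Rightarrow> 'h" where ph: "\<forall>x x'. K x x' = inner (\<phi> x) (\<phi> x')"
    using assms unfolding is_kernel_def by blast
  have "(\<lambda>x. inner (0::'h) (\<phi> x)) \<in> Fk T K" unfolding Fk_def
    by (intro CollectI exI[of _ \<phi>] conjI ph exI[of _ "0::'h"]) auto
  then show ?thesis by blast
qed

lemma Ldist_self: "Ldist M P h h = 0"
  unfolding Ldist_def by simp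

lemma DQ_self: "DQ T M r Q K K = 0"
proof -
  have "Dk T M (Q i) K K \<le> 0" for i
  proof -
    have "(SUP h\<in>Fk T K. INF h'\<in>Fk T K. Ldist M (Q i) h h') \<le> 0"
      by (intro SUP_least) (metis INF_lower Ldist_self)
    moreover have "(SUP h'\<in>Fk T K. INF h\<in>Fk T K. Ldist M (Q i) h h') \<le> 0"
      by (intro SUP_least) (metis INF_lower Ldist_self)
    ultimately show ?thesis unfolding Dk_def by simp
  qed
  then have "DQ T M r Q K K \<le> 0" unfolding DQ_def by (intro SUP_least) auto
  then show ?thesis by simp
qed

theorem lemma5:
  fixes T :: "'h::{real_inner,complete_space} itself"
    and M :: "'x measure"
    and Ks :: "('x \<Rightarrow> 'x \<Rightarrow> real) set"
    and \<epsilon> \<gamma> :: real and n :: nat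
    and P :: "nat \<Rightarrow> ('x \<times> bool) measure"
  assumes kernels: "\<forall>K\<in>Ks. is_kernel T K"
    and meas: "\<forall>K\<in>Ks. \<forall>h\<in>Fk T K. h \<in> borel_measurable M"
    and eps: "\<epsilon> > 0" and gam: "\<gamma> > 0"
    and P: "\<forall>i<2*n. dist_XY M (P i)"
  shows "\<exists>C\<subseteq>Ks. ecard C \<le> cov_num_max T M (2*n) Ks (ennreal (\<epsilon>*\<gamma>/16)) \<and>
           (\<forall>K\<in>Ks. \<exists>K'\<in>C. \<forall>i<2*n.
              err_margin (P i) \<gamma> (Fk T K) + \<epsilon>/8 \<ge> err_margin (P i) (\<gamma>/2) (Fk T K') \<and>
              err_margin (P i) (\<gamma>/2) (Fk T K') \<ge> err (P i) (Fk T K) - \<epsilon>/8)"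
proof -
  define e' where "e' = ennreal (\<epsilon>*\<gamma>/16)"
  have e'pos: "0 < e'" unfolding e'_def using eps gam by simp
  define S where "S = {C. is_cover T M (2*n) P Ks e' C}"
  have "Ks \<in> S" unfolding S_def is_cover_def proof (intro CollectI conjI ballI subset_refl)
    fix K assume "K \<in> Ks" then show "\<exists>K'\<in>Ks. DQ T M (2*n) P K K' < e'" using e'pos by (intro bexI[of _ K]) (simp_all add: DQ_self)
  qed
  then have "Inf (ecard ` S) \<in> ecard ` S" by (intro wellorder_InfI) blast
  then obtain C where CS: "C \<in> S" and Ceq: "ecard C = cov_num T M (2*n) P Ks e'"
    unfolding cov_num_def S_def by auto
  have "cov_num T M (2*n) P Ks e' \<le> cov_num_max T M (2*n) Ks e'"
    unfolding cov_num_max_def using P by (intro SUP_upper) auto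
  with Ceq have card: "ecard C \<le> cov_num_max T M (2*n) Ks e'" by simp
  have CK: "C \<subseteq> Ks" and cov: "\<forall>K\<in>Ks. \<exists>K'\<in>C. DQ T M (2*n) P K K' < e'"
    using CS unfolding S_def is_cover_def by auto
  have main: "err_margin (P i) \<gamma> (Fk T K) + \<epsilon>/8 \<ge> err_margin (P i) (\<gamma>/2) (Fk T K') \<and>
              err_margin (P i) (\<gamma>/2) (Fk T K') \<ge> err (P i) (Fk T K) - \<epsilon>/8"
    if K: "K \<in> Ks" and K': "K' \<in> Ks" and D: "DQ T M (2*n) P K K' < e'" and i: "i < 2*n" for K K' i
  proof -
    have "Dk T M (P i) K K' \<le> DQ T M (2*n) P K K'"
      unfolding DQ_def using i by (intro SUP_upper) auto
    with D have "Dk T M (P i) K K' < e'" by simp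
    then have S1: "(SUP h\<in>Fk T K. INF h'\<in>Fk T K'. Ldist M (P i) h h') < e'"
      and S2: "(SUP h'\<in>Fk T K'. INF h\<in>Fk T K. Ldist M (P i) h h') < e'"
      unfolding Dk_def by auto
    have A: "\<exists>h'\<in>Fk T K'. Ldist M (P i) h h' < e'" if "h \<in> Fk T K" for h
    proof -
      have "(INF h'\<in>Fk T K'. Ldist M (P i) h h') < e'"
        using order.strict_trans1[OF SUP_upper[OF that] S1] by simp
      then show ?thesis by (simp add: INF_less_iff)
    qed
    have B: "\<exists>h\<in>Fk T K. Ldist M (P i) h h' < e'" if "h' \<in> Fk T K'" for h'
    proof -
      have "(INF h\<in>Fk T K. Ldist M (P i) h h') < e'"
        using order.strict_trans1[OF SUP_upper[OF that] S2] by simp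
      then show ?thesis by (simp add: INF_less_iff)
    qed
    have ps: "prob_space (P i)" and sP: "sets (P i) = sets (M \<Otimes>\<^sub>M count_space UNIV)"
      using P i unfolding dist_XY_def by auto
    have ne: "Fk T K \<noteq> {}" "Fk T K' \<noteq> {}" using kernels K K' Fk_nonempty by blast+
    have bdd: "bdd_below ((\<lambda>h. measure (P i) {z \<in> space (P i). h (fst z) * lab (snd z) < c}) ` F)"
      for c F by (rule bdd_belowI[where m=0]) auto
    have I1: "err_margin (P i) (\<gamma>/2) (Fk T K') - \<epsilon>/8 \<le> err_margin (P i) \<gamma> (Fk T K)"
      unfolding err_margin_def
    proof (rule cINF_greatest[OF ne(1)])
      fix h assume h: "h \<in> Fk T K"
      then obtain h' where h': "h' \<in> Fk T K'" and L: "Ldist M (P i) h h' < e'" using A by blast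
      have "measure (P i) {z\<in>space (P i). h' (fst z) * lab (snd z) < \<gamma>/2}
           < measure (P i) {z\<in>space (P i). h (fst z) * lab (snd z) < \<gamma>} + \<epsilon>/8"
        using pair_step(1)[OF ps sP _ _ L[unfolded e'_def] eps gam] meas K K' h h' by blast
      moreover have "(INF h'\<in>Fk T K'. measure (P i) {z \<in> space (P i). h' (fst z) * lab (snd z) < \<gamma>/2})
          \<le> measure (P i) {z\<in>space (P i). h' (fst z) * lab (snd z) < \<gamma>/2}"
        by (rule cINF_lower[OF bdd h'])
      ultimately show "(INF h'\<in>Fk T K'. measure (P i) {z \<in> space (P i). h' (fst z) * lab (snd z) < \<gamma>/2}) - \<epsilon>/8
          \<le> measure (P i) {z\<in>space (P i). h (fst z) * lab (snd z) < \<gamma>}" by linarith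
    qed
    have I2: "err (P i) (Fk T K) - \<epsilon>/8 \<le> err_margin (P i) (\<gamma>/2) (Fk T K')"
      unfolding err_margin_def
    proof (rule cINF_greatest[OF ne(2)])
      fix h' assume h': "h' \<in> Fk T K'"
      then obtain h where h: "h \<in> Fk T K" and L: "Ldist M (P i) h h' < e'" using B by blast
      have "measure (P i) {z\<in>space (P i). h (fst z) * lab (snd z) < 0}
           < measure (P i) {z\<in>space (P i). h' (fst z) * lab (snd z) < \<gamma>/2} + \<epsilon>/8"
        using pair_step(2)[OF ps sP _ _ L[unfolded e'_def] eps gam] meas K K' h h' by blast
      moreover have "err (P i) (Fk T K)
          \<le> measure (P i) {z\<in>space (P i). h (fst z) * lab (snd z) < 0}"
        unfolding err_def by (rule cINF_lower[OF bdd h])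
      ultimately show "err (P i) (Fk T K) - \<epsilon>/8
          \<le> measure (P i) {z\<in>space (P i). h' (fst z) * lab (snd z) < \<gamma>/2}" by linarith
    qed
    show ?thesis using I1 I2 by linarith
  qed
  show ?thesis
  proof (intro exI[of _ C] conjI)
    show "C \<subseteq> Ks" by (rule CK)
    show "ecard C \<le> cov_num_max T M (2*n) Ks (ennreal (\<epsilon>*\<gamma>/16))" using card unfolding e'_def .
    show "\<forall>K\<in>Ks. \<exists>K'\<in>C. \<forall>i<2*n.
              err_margin (P i) \<gamma> (Fk T K) + \<epsilon>/8 \<ge> err_margin (P i) (\<gamma>/2) (Fk T K') \<and>
              err_margin (P i) (\<gamma>/2) (Fk T K') \<ge> err (P i) (Fk T K) - \<epsilon>/8"
    proof
      fix K assume K: "K \<in> Ks"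
      then obtain K' where K': "K' \<in> C" and D: "DQ T M (2*n) P K K' < e'" using cov by blast
      show "\<exists>K'\<in>C. \<forall>i<2*n.
              err_margin (P i) \<gamma> (Fk T K) + \<epsilon>/8 \<ge> err_margin (P i) (\<gamma>/2) (Fk T K') \<and>
              err_margin (P i) (\<gamma>/2) (Fk T K') \<ge> err (P i) (Fk T K) - \<epsilon>/8"
        using main[OF K _ D] K' CK by blast
    qed
  qed
qed

end
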